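(* Let $\Omega\subseteq\mathbb{R}^d$ be a compact convex set with non-empty interior, and let $\mu_0,\mu_1$ have Lebesgue densities $p_0,p_1$ supported on $\Omega$ that are continuous, uniformly bounded and bounded away from zero on $\Omega$. Let $X_0\sim\mu_0$, $X_1\sim\mu_1$, and define $$v(t,z)=\begin{cases}\mathbb{E}[X_1]-z,& t=0,\ z\in\Omega,\\ \dfrac{\int_{S_t(z)}\delta\,p_0(z-t\delta)p_1(z+(1-t)\delta)d\delta}{\int_{S_t(z)}p_0(z-t\delta)p_1(z+(1-t)\delta)d\delta},& t\in(0,1),\ z\in\Omega^\circ,\\ z-\mathbb{E}[X_0],& t=1,\ z\in\Omega,\end{cases}$$ where $S_t(z)=\{\delta: z-t\delta\in\Omega,\ z+(1-t)\delta\in\Omega\}$. Then for each $t\in[0,1]$, $z\mapsto v(t,z)$ is continuous on its domain. Additionally, for $t\in(0,1)$, setting $v(t,z)=0$ for $z\in\mathrm{SC}(\Omega)$ gives the unique continuous extension of $z\mapsto v(t,z)$ to $\mathrm{SC}(\Omega)$.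
   Context: For a set $A\subseteq\mathbb{R}^d$ and $a\in A$, the modulus of convexity at $a$ is $\mathfrak m_a(\varepsilon;A)=\inf\{\mathrm{dist}(\frac{a+b}{2},\partial A): b\in A,\ \|a-b\|\ge\varepsilon\}$ for $\varepsilon\in[0,\mathrm{diam}(A)]$, and $\mathrm{SC}(A)=\{a\in\partial A:\mathfrak m_a(\varepsilon;A)>0\text{ for all }\varepsilon\in(0,\mathrm{diam}(A)]\}$ (the boundary points at which $A$ is strictly convex). *)

theory Defs
  imports "HOL-Analysis.Analysis"
begin

text \<open>Modulus of convexity of A at a (extended-real valued, so that the infimum of the
  empty set is +\<infinity>), and the set SC(A) of boundary points of strict convexity.\<close>
definition modconv :: "'a::euclidean_space set \<Rightarrow> 'a \<Rightarrow> real \<Rightarrow> ereal" where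
  "modconv A a \<epsilon> =
     (INF b \<in> {b \<in> A. norm (a - b) \<ge> \<epsilon>}. ereal (infdist ((1/2) *\<^sub>R (a + b)) (frontier A)))"

definition SC :: "'a::euclidean_space set \<Rightarrow> 'a set" where
  "SC A = {a \<in> frontier A. \<forall>\<epsilon>. 0 < \<epsilon> \<and> \<epsilon> \<le> diameter A \<longrightarrow> modconv A a \<epsilon> > 0}"

definition Sset :: "'a::euclidean_space set \<Rightarrow> real \<Rightarrow> 'a \<Rightarrow> 'a set" where
  "Sset \<Omega> t z = {\<delta>. z - t *\<^sub>R \<delta> \<in> \<Omega> \<and> z + (1 - t) *\<^sub>R \<delta> \<in> \<Omega>}"

definition mean :: "('a::euclidean_space \<Rightarrow> real) \<Rightarrow> 'a" where
  "mean p = integral\<^sup>L lborel (\<lambda>x. p x *\<^sub>R x)"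

definition vfield :: "'a::euclidean_space set \<Rightarrow> ('a \<Rightarrow> real) \<Rightarrow> ('a \<Rightarrow> real) \<Rightarrow> real \<Rightarrow> 'a \<Rightarrow> 'a" where
  "vfield \<Omega> p0 p1 t z =
     (if t = 0 then mean p1 - z
      else if t = 1 then z - mean p0
      else (1 / set_lebesgue_integral lborel (Sset \<Omega> t z)
                  (\<lambda>\<delta>. p0 (z - t *\<^sub>R \<delta>) * p1 (z + (1 - t) *\<^sub>R \<delta>)))
           *\<^sub>R set_lebesgue_integral lborel (Sset \<Omega> t z)
                  (\<lambda>\<delta>. (p0 (z - t *\<^sub>R \<delta>) * p1 (z + (1 - t) *\<^sub>R \<delta>)) *\<^sub>R \<delta>))"

end

theory Submission
  imports Defs
begin

lemma isCont_zero_outside: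
  fixes p :: "'a::euclidean_space \<Rightarrow> real"
  assumes "closed \<Omega>" "continuous_on \<Omega> p" "\<And>x. x \<notin> \<Omega> \<Longrightarrow> p x = 0" "x \<notin> frontier \<Omega>"
  shows "isCont p x"
proof (cases "x \<in> interior \<Omega>")
  case True
  then show ?thesis using assms(2) continuous_on_interior by blast
next
  case False
  then have x: "x \<in> - \<Omega>" using assms(1,4) by (simp add: frontier_def closure_closed)
  have "open (- \<Omega>)" using assms(1) by auto
  then have "eventually (\<lambda>y. y \<in> - \<Omega>) (at x)"
    using x eventually_at_topological by blast
  then have "eventually (\<lambda>y. p y = p x) (at x)"
    by eventually_elim (use x assms(3) in auto)
  then show ?thesis unfolding isCont_def by (rule tendsto_eventually)
qed

lemma AE_lborel_affine_eucl:
  fixes P :: "'a::euclidean_space \<Rightarrow> bool" and c :: real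
  shows "c \<noteq> 0 \<Longrightarrow> Measurable.pred borel P \<Longrightarrow> AE x in lborel. P x \<Longrightarrow> AE x in lborel. P (t + c *\<^sub>R x)"
  by (subst lborel_affine[where t="- (1/c) *\<^sub>R t" and c="1 / c"])
     (simp_all add: AE_density AE_distr_iff field_simps)

lemma frontier_null:
  fixes \<Omega> :: "'a::euclidean_space set"
  assumes "convex \<Omega>"
  shows "frontier \<Omega> \<in> null_sets lborel"
proof -
  have "negligible (frontier \<Omega>)" by (rule negligible_convex_frontier[OF assms])
  hence "frontier \<Omega> \<in> null_sets lebesgue" by (simp add: negligible_iff_null_sets)
  moreover have "frontier \<Omega> \<in> sets lborel" by (simp add: frontier_closed borel_closed)
  ultimately show ?thesis by (simp add: null_sets_completion_iff)
qed

lemma AE_not_frontier: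
  fixes \<Omega> :: "'a::euclidean_space set" and c :: real
  assumes "convex \<Omega>" "c \<noteq> 0"
  shows "AE x in lborel. z + c *\<^sub>R x \<notin> frontier \<Omega>"
proof -
  have "AE x in lborel. x \<notin> frontier \<Omega>"
    using frontier_null[OF assms(1)] by (rule AE_not_in)
  moreover have [measurable]: "frontier \<Omega> \<in> sets borel" by (simp add: frontier_closed borel_closed)
  moreover have "Measurable.pred borel (\<lambda>x. x \<notin> frontier \<Omega>)" by measurable
  ultimately have "AE x in lborel. (\<lambda>y. y \<notin> frontier \<Omega>) (z + c *\<^sub>R x)"
    using AE_lborel_affine_eucl[OF assms(2)] by blast
  then show ?thesis by simp
qed

lemma ball_sub_from_infdist:
  fixes \<Omega> :: "'a::euclidean_space set"
  assumes "m \<in> \<Omega>" "\<rho> \<le> infdist m (frontier \<Omega>)"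
  shows "ball m \<rho> \<subseteq> \<Omega>"
proof (rule ccontr)
  assume "\<not> ball m \<rho> \<subseteq> \<Omega>"
  then have ne: "ball m \<rho> - \<Omega> \<noteq> {}" by auto
  then obtain y where "y \<in> ball m \<rho>" by blast
  then have "0 \<le> dist m y" "dist m y < \<rho>" by auto
  then have "\<rho> > 0" by linarith
  then have "m \<in> ball m \<rho> \<inter> \<Omega>" using assms(1) by auto
  then have "ball m \<rho> \<inter> \<Omega> \<noteq> {}" by blast
  then obtain f where f: "f \<in> ball m \<rho>" "f \<in> frontier \<Omega>"
    using connected_Int_frontier[OF connected_ball _ ne] by blast
  have "infdist m (frontier \<Omega>) \<le> dist m f" using f(2) by (rule infdist_le)
  with f(1) assms(2) show False by auto
qed


definition qf :: "('a::euclidean_space \<Rightarrow> real) \<Rightarrow> ('a \<Rightarrow> real) \<Rightarrow> real \<Rightarrow> 'a \<Rightarrow> 'a \<Rightarrow> real" where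
  "qf p0 p1 t z \<delta> = p0 (z - t *\<^sub>R \<delta>) * p1 (z + (1 - t) *\<^sub>R \<delta>)"

lemma set_integral_full:
  assumes "\<And>\<delta>. \<delta> \<notin> A \<Longrightarrow> f \<delta> = 0"
  shows "set_lebesgue_integral M A f = integral\<^sup>L M f"
  unfolding set_lebesgue_integral_def
  by (rule Bochner_Integration.integral_cong) (auto simp: indicator_def assms)

lemma qf_vanish:
  assumes "\<And>x. x \<notin> \<Omega> \<Longrightarrow> p0 x = 0" "\<And>x. x \<notin> \<Omega> \<Longrightarrow> p1 x = 0" "\<delta> \<notin> Sset \<Omega> t z"
  shows "qf p0 p1 t z \<delta> = 0"
  using assms unfolding qf_def Sset_def by auto

lemma qf_support:
  assumes "\<And>x. x \<notin> \<Omega> \<Longrightarrow> p0 x = 0" "\<And>x. x \<notin> \<Omega> \<Longrightarrow> p1 x = 0" "bounded \<Omega>"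
    "qf p0 p1 t z \<delta> \<noteq> 0"
  shows "norm \<delta> \<le> diameter \<Omega>"
proof -
  have "\<delta> \<in> Sset \<Omega> t z" using qf_vanish[of \<Omega> p0 p1 \<delta> t z] assms by blast
  then have "z - t *\<^sub>R \<delta> \<in> \<Omega>" "z + (1 - t) *\<^sub>R \<delta> \<in> \<Omega>" unfolding Sset_def by auto
  then have "dist (z + (1 - t) *\<^sub>R \<delta>) (z - t *\<^sub>R \<delta>) \<le> diameter \<Omega>"
    using diameter_bounded_bound[OF assms(3)] by blast
  moreover have "dist (z + (1 - t) *\<^sub>R \<delta>) (z - t *\<^sub>R \<delta>) = norm \<delta>"
    by (simp add: dist_norm algebra_simps)
  ultimately show ?thesis by simp
qed

lemma qf_meas:
  assumes [measurable]: "p0 \<in> borel_measurable borel" "p1 \<in> borel_measurable borel"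
  shows "(\<lambda>\<delta>. qf p0 p1 t z \<delta>) \<in> borel_measurable lborel"
proof -
  have "(\<lambda>\<delta>::'a. z - t *\<^sub>R \<delta>) \<in> borel_measurable borel"
    by (intro borel_measurable_continuous_onI continuous_intros)
  then have a: "(\<lambda>\<delta>. p0 (z - t *\<^sub>R \<delta>)) \<in> borel_measurable borel"
    using assms(1) by (rule measurable_compose)
  have "(\<lambda>\<delta>::'a. z + (1 - t) *\<^sub>R \<delta>) \<in> borel_measurable borel"
    by (intro borel_measurable_continuous_onI continuous_intros)
  then have b: "(\<lambda>\<delta>. p1 (z + (1 - t) *\<^sub>R \<delta>)) \<in> borel_measurable borel"
    using assms(2) by (rule measurable_compose)
  show ?thesis unfolding qf_def using a b by simp
qed

lemma qf_bound:
  assumes "\<And>x. 0 \<le> p0 x" "\<And>x. p0 x \<le> M0" "\<And>x. 0 \<le> p1 x" "\<And>x. p1 x \<le> M1"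
  shows "\<bar>qf p0 p1 t z \<delta>\<bar> \<le> M0 * M1" "0 \<le> qf p0 p1 t z \<delta>"
proof -
  have "0 \<le> M0" using assms(1)[of 0] assms(2)[of 0] by linarith
  then show "\<bar>qf p0 p1 t z \<delta>\<bar> \<le> M0 * M1" "0 \<le> qf p0 p1 t z \<delta>"
  proof -
    have n: "0 \<le> p0 (z - t *\<^sub>R \<delta>) * p1 (z + (1 - t) *\<^sub>R \<delta>)"
      using assms(1,3) by (rule mult_nonneg_nonneg)
    have "p0 (z - t *\<^sub>R \<delta>) * p1 (z + (1 - t) *\<^sub>R \<delta>) \<le> M0 * M1"
      by (rule mult_mono) (use assms \<open>0 \<le> M0\<close> in blast)+
    with n show "\<bar>qf p0 p1 t z \<delta>\<bar> \<le> M0 * M1" "0 \<le> qf p0 p1 t z \<delta>"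
      unfolding qf_def by simp_all
  qed
qed


lemma cont_int:
  fixes h :: "'a::euclidean_space \<Rightarrow> 'b::{banach, second_countable_topology}"
  assumes conv: "convex \<Omega>" and cpt: "compact \<Omega>"
    and c0: "continuous_on \<Omega> p0" and c1: "continuous_on \<Omega> p1"
    and z0: "\<And>x. x \<notin> \<Omega> \<Longrightarrow> p0 x = 0" and z1: "\<And>x. x \<notin> \<Omega> \<Longrightarrow> p1 x = 0"
    and b: "\<And>x. 0 \<le> p0 x" "\<And>x. p0 x \<le> Mx" "\<And>x. 0 \<le> p1 x" "\<And>x. p1 x \<le> My"
    and m0 [measurable]: "p0 \<in> borel_measurable borel" and m1 [measurable]: "p1 \<in> borel_measurable borel"
    and hc: "continuous_on UNIV h" and hb: "\<And>\<delta>. norm \<delta> \<le> diameter \<Omega> \<Longrightarrow> norm (h \<delta>) \<le> B"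
    and B: "0 \<le> B" and t: "0 < t" "t < 1"
  shows "isCont (\<lambda>z. integral\<^sup>L lborel (\<lambda>\<delta>. qf p0 p1 t z \<delta> *\<^sub>R h \<delta>)) zz"
    and "integrable lborel (\<lambda>\<delta>. qf p0 p1 t zz \<delta> *\<^sub>R h \<delta>)"
proof -
  have bdd: "bounded \<Omega>" using cpt by (rule compact_imp_bounded)
  have cl: "closed \<Omega>" using cpt by (rule compact_imp_closed)
  have hm [measurable]: "h \<in> borel_measurable borel" using hc by (rule borel_measurable_continuous_onI)
  define R where "R = diameter \<Omega>"
  define w where "w = (\<lambda>\<delta>::'a. Mx * My * B * indicator (cball 0 R) \<delta>)"
  have Mx: "0 \<le> Mx" using b(1,2) order_trans by blast
  have My: "0 \<le> My" using b(3,4) order_trans by blast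
  have wint: "integrable lborel w"
    unfolding w_def by (intro integrable_mult_right integrable_real_indicator) (use emeasure_lborel_cball_finite[of "0::'a" R] in auto)
  have meas: "(\<lambda>\<delta>. qf p0 p1 t z \<delta> *\<^sub>R h \<delta>) \<in> borel_measurable lborel" for z
    using qf_meas[OF m0 m1, of t z] hm by (intro borel_measurable_scaleR) auto
  have bound: "norm (qf p0 p1 t z \<delta> *\<^sub>R h \<delta>) \<le> w \<delta>" for z \<delta>
  proof (cases "qf p0 p1 t z \<delta> = 0")
    case True
    then show ?thesis using Mx My B by (simp add: w_def)
  next
    case False
    then have "norm \<delta> \<le> R" unfolding R_def using qf_support[of \<Omega> p0 p1, OF z0 z1 bdd] by blast
    then have "w \<delta> = Mx * My * B" by (simp add: w_def)
    moreover have "norm (qf p0 p1 t z \<delta> *\<^sub>R h \<delta>) = \<bar>qf p0 p1 t z \<delta>\<bar> * norm (h \<delta>)" by simp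
    moreover have qb: "\<bar>qf p0 p1 t z \<delta>\<bar> \<le> Mx * My" by (rule qf_bound(1)) (rule b)+
    moreover have "\<bar>qf p0 p1 t z \<delta>\<bar> * norm (h \<delta>) \<le> (Mx * My) * B"
      using qb hb \<open>norm \<delta> \<le> R\<close> unfolding R_def
      by (intro mult_mono) (auto simp: Mx My)
    ultimately show ?thesis by simp
  qed
  show "integrable lborel (\<lambda>\<delta>. qf p0 p1 t zz \<delta> *\<^sub>R h \<delta>)"
  proof (rule Bochner_Integration.integrable_bound[OF wint meas[of zz]])
    show "AE x in lborel. norm (qf p0 p1 t zz x *\<^sub>R h x) \<le> norm (w x)"
    proof (rule AE_I2)
      fix x
      have "w x \<le> norm (w x)" by simp
      then show "norm (qf p0 p1 t zz x *\<^sub>R h x) \<le> norm (w x)" using bound[of zz x] by linarith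
    qed
  qed
  show "isCont (\<lambda>z. integral\<^sup>L lborel (\<lambda>\<delta>. qf p0 p1 t z \<delta> *\<^sub>R h \<delta>)) zz"
    unfolding continuous_at_sequentially
  proof (intro allI impI)
    fix x :: "nat \<Rightarrow> 'a" assume x: "x \<longlonglongrightarrow> zz"
    have ae: "AE \<delta> in lborel. zz - t *\<^sub>R \<delta> \<notin> frontier \<Omega>"
      using AE_not_frontier[OF conv, of "-t" zz] t by simp
    have ae2: "AE \<delta> in lborel. zz + (1 - t) *\<^sub>R \<delta> \<notin> frontier \<Omega>"
      using AE_not_frontier[OF conv, of "1-t" zz] t by simp
    have lim: "AE \<delta> in lborel. (\<lambda>i. qf p0 p1 t (x i) \<delta> *\<^sub>R h \<delta>) \<longlonglongrightarrow> qf p0 p1 t zz \<delta> *\<^sub>R h \<delta>"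
      using ae ae2
    proof eventually_elim
      case (elim \<delta>)
      have i0: "isCont p0 (zz - t *\<^sub>R \<delta>)"
        using isCont_zero_outside[of \<Omega> p0 "zz - t *\<^sub>R \<delta>"] cl c0 z0 elim(1) by blast
      have i1: "isCont p1 (zz + (1 - t) *\<^sub>R \<delta>)"
        using isCont_zero_outside[of \<Omega> p1 "zz + (1 - t) *\<^sub>R \<delta>"] cl c1 z1 elim(2) by blast
      have l0: "(\<lambda>i. p0 (x i - t *\<^sub>R \<delta>)) \<longlonglongrightarrow> p0 (zz - t *\<^sub>R \<delta>)"
        by (rule isCont_tendsto_compose[OF i0 tendsto_diff[OF x tendsto_const]])
      have l1: "(\<lambda>i. p1 (x i + (1 - t) *\<^sub>R \<delta>)) \<longlonglongrightarrow> p1 (zz + (1 - t) *\<^sub>R \<delta>)"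
        by (rule isCont_tendsto_compose[OF i1 tendsto_add[OF x tendsto_const]])
      show ?case unfolding qf_def by (rule tendsto_scaleR[OF tendsto_mult[OF l0 l1] tendsto_const])
    qed
    have "(\<lambda>i. integral\<^sup>L lborel (\<lambda>\<delta>. qf p0 p1 t (x i) \<delta> *\<^sub>R h \<delta>)) \<longlonglongrightarrow> integral\<^sup>L lborel (\<lambda>\<delta>. qf p0 p1 t zz \<delta> *\<^sub>R h \<delta>)"
      by (rule integral_dominated_convergence[where s="\<lambda>i \<delta>. qf p0 p1 t (x i) \<delta> *\<^sub>R h \<delta>" and f="\<lambda>\<delta>. qf p0 p1 t zz \<delta> *\<^sub>R h \<delta>" and w=w, OF meas meas wint lim]) (rule AE_I2, rule bound)
    then show "((\<lambda>z. integral\<^sup>L lborel (\<lambda>\<delta>. qf p0 p1 t z \<delta> *\<^sub>R h \<delta>)) \<circ> x) \<longlonglongrightarrow> integral\<^sup>L lborel (\<lambda>\<delta>. qf p0 p1 t zz \<delta> *\<^sub>R h \<delta>)"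
      by (simp add: o_def)
  qed
qed


lemma int_bound:
  assumes "integrable lborel (\<lambda>\<delta>. qf p0 p1 t z \<delta>)" "integrable lborel (\<lambda>\<delta>. qf p0 p1 t z \<delta> *\<^sub>R \<delta>)"
    and "\<And>\<delta>. qf p0 p1 t z \<delta> \<noteq> 0 \<Longrightarrow> norm \<delta> \<le> e"
    and "\<And>\<delta>. 0 \<le> qf p0 p1 t z \<delta>"
  shows "norm (integral\<^sup>L lborel (\<lambda>\<delta>. qf p0 p1 t z \<delta> *\<^sub>R \<delta>)) \<le> e * integral\<^sup>L lborel (\<lambda>\<delta>. qf p0 p1 t z \<delta>)"
proof -
  have "norm (integral\<^sup>L lborel (\<lambda>\<delta>. qf p0 p1 t z \<delta> *\<^sub>R \<delta>)) \<le> integral\<^sup>L lborel (\<lambda>\<delta>. e * qf p0 p1 t z \<delta>)"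
  proof (rule Bochner_Integration.integral_norm_bound_integral)
    show "integrable lborel (\<lambda>\<delta>. e * qf p0 p1 t z \<delta>)" using assms(1) by (rule integrable_mult_right)
    show "integrable lborel (\<lambda>\<delta>. qf p0 p1 t z \<delta> *\<^sub>R \<delta>)" by (rule assms(2))
    fix \<delta> :: 'a
    show "norm (qf p0 p1 t z \<delta> *\<^sub>R \<delta>) \<le> e * qf p0 p1 t z \<delta>"
    proof (cases "qf p0 p1 t z \<delta> = 0")
      case True then show ?thesis by simp
    next
      case False
      have "norm (qf p0 p1 t z \<delta> *\<^sub>R \<delta>) = qf p0 p1 t z \<delta> * norm \<delta>" using assms(4)[of \<delta>] by simp
      also have "\<dots> \<le> qf p0 p1 t z \<delta> * e" using assms(3)[OF False] assms(4)[of \<delta>] by (rule mult_left_mono)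
      finally show ?thesis by (simp add: mult.commute)
    qed
  qed
  also have "\<dots> = e * integral\<^sup>L lborel (\<lambda>\<delta>. qf p0 p1 t z \<delta>)" by simp
  finally show ?thesis .
qed

lemma int_pos:
  assumes "integrable lborel (\<lambda>\<delta>. qf p0 p1 t z \<delta>)"
    and "\<And>\<delta>. 0 \<le> qf p0 p1 t z \<delta>"
    and lo0: "\<And>x. x \<in> \<Omega> \<Longrightarrow> ca \<le> p0 x" and lo1: "\<And>x. x \<in> \<Omega> \<Longrightarrow> cb \<le> p1 x"
    and "0 < ca" "0 < cb" "z \<in> interior \<Omega>" "0 < t" "t < 1"
  shows "0 < integral\<^sup>L lborel (\<lambda>\<delta>. qf p0 p1 t z \<delta>)"
proof -
  obtain r where r: "r > 0" "ball z r \<subseteq> \<Omega>" using assms(7) mem_interior by blast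
  have ind: "integrable lborel (\<lambda>\<delta>::'a. ca * cb * indicator (ball 0 r) \<delta>)"
    by (intro integrable_mult_right integrable_real_indicator) (use emeasure_lborel_ball_finite[of "0::'a" r] in auto)
  have le: "ca * cb * indicator (ball 0 r) \<delta> \<le> qf p0 p1 t z \<delta>" for \<delta> :: 'a
  proof (cases "\<delta> \<in> ball 0 r")
    case True
    then have nd: "norm \<delta> < r" by simp
    have "dist z (z - t *\<^sub>R \<delta>) = t * norm \<delta>" using assms(8) by (simp add: dist_norm)
    also have "\<dots> < r" using nd assms(8,9)
      by (metis mult_le_cancel_right2 norm_ge_zero not_less order_le_less_trans less_eq_real_def)
    finally have x0: "z - t *\<^sub>R \<delta> \<in> \<Omega>" using r(2) by auto
    have "dist z (z + (1 - t) *\<^sub>R \<delta>) = (1 - t) * norm \<delta>" using assms(9) by (simp add: dist_norm)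
    also have "\<dots> < r" using nd assms(8,9)
      by (metis diff_ge_0_iff_ge diff_less_eq less_add_same_cancel1 mult_le_cancel_right2 norm_ge_zero not_less order_le_less_trans less_eq_real_def)
    finally have x1: "z + (1 - t) *\<^sub>R \<delta> \<in> \<Omega>" using r(2) by auto
    have "ca * cb \<le> p0 (z - t *\<^sub>R \<delta>) * p1 (z + (1 - t) *\<^sub>R \<delta>)"
      by (rule mult_mono) (use lo0[OF x0] lo1[OF x1] assms(5,6) in auto)
    then show ?thesis using True by (simp add: qf_def)
  next
    case False
    then show ?thesis using assms(2)[of \<delta>] by simp
  qed
  have "integral\<^sup>L lborel (\<lambda>\<delta>::'a. ca * cb * indicator (ball 0 r) \<delta>) \<le> integral\<^sup>L lborel (\<lambda>\<delta>. qf p0 p1 t z \<delta>)"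
    by (rule integral_mono[OF ind assms(1) le])
  moreover have "integral\<^sup>L lborel (\<lambda>\<delta>::'a. ca * cb * indicator (ball 0 r) \<delta>) = ca * cb * measure lborel (ball (0::'a) r)"
    by simp
  moreover have "0 < ca * cb * measure lborel (ball (0::'a) r)"
    using content_ball_pos[OF r(1)] assms(5,6) by simp
  ultimately show ?thesis by linarith
qed

lemma lin_aux1:
  fixes t A X P Q Z m :: real
  assumes "Z = (1-t)*P + t*Q" "(1-t)*(A+X) \<le> (1-t)*P" "t*A \<le> t*Q" "m \<le> (1-t)*X"
  shows "m \<le> Z - A"
proof -
  have "(1-t)*(A+X) + t*A - A = (1-t)*X" by (simp add: algebra_simps)
  then show ?thesis using assms by linarith
qed

lemma lin_aux2:
  fixes t A X P Q Z m :: real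
  assumes "Z = (1-t)*P + t*Q" "t*(A+X) \<le> t*Q" "(1-t)*A \<le> (1-t)*P" "m \<le> t*X"
  shows "m \<le> Z - A"
proof -
  have "t*(A+X) + (1-t)*A - A = t*X" by (simp add: algebra_simps)
  then show ?thesis using assms by linarith
qed

lemma SC_small:
  fixes \<Omega> :: "'a::euclidean_space set"
  assumes cpt: "compact \<Omega>" and conv: "convex \<Omega>" and int: "interior \<Omega> \<noteq> {}"
    and a: "a \<in> SC \<Omega>" and e: "e > 0" and t: "0 < t" "t < 1"
  shows "\<exists>\<eta>>0. \<forall>z \<delta>. dist z a < \<eta> \<longrightarrow> \<delta> \<in> Sset \<Omega> t z \<longrightarrow> norm \<delta> < e"
proof -
  have bdd: "bounded \<Omega>" using cpt by (rule compact_imp_bounded)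
  have cl: "closed \<Omega>" using cpt by (rule compact_imp_closed)
  have af: "a \<in> frontier \<Omega>" using a by (simp add: SC_def)
  have a\<Omega>: "a \<in> \<Omega>" using af cl by (simp add: frontier_def)
  have ani: "a \<notin> rel_interior \<Omega>" using af rel_interior_nonempty_interior[OF int] by (simp add: frontier_def)
  have acl: "a \<in> closure \<Omega>" using a\<Omega> closure_subset by blast
  obtain n where n: "n \<noteq> 0" "\<And>y. y \<in> closure \<Omega> \<Longrightarrow> n \<bullet> a \<le> n \<bullet> y"
    using supporting_hyperplane_relative_frontier[OF conv acl ani] by metis
  have n\<Omega>: "n \<bullet> a \<le> n \<bullet> y" if "y \<in> \<Omega>" for y using n(2) closure_subset that by blast
  have nn: "norm n > 0" using n(1) by simp
  have split: "e/2 \<le> norm (a - (z - t *\<^sub>R \<delta>)) \<or> e/2 \<le> norm (a - (z + (1 - t) *\<^sub>R \<delta>))"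
    if "e \<le> norm \<delta>" for z \<delta>
  proof -
    have "\<delta> = (a - (z - t *\<^sub>R \<delta>)) - (a - (z + (1 - t) *\<^sub>R \<delta>))" by (simp add: algebra_simps)
    then have "norm \<delta> \<le> norm (a - (z - t *\<^sub>R \<delta>)) + norm (a - (z + (1 - t) *\<^sub>R \<delta>))"
      by (metis norm_triangle_ineq4)
    then show ?thesis using that by linarith
  qed
  show ?thesis
  proof (cases "\<exists>b\<in>\<Omega>. e/2 \<le> norm (a - b)")
    case False
    show ?thesis
    proof (intro exI[of _ 1] conjI allI impI)
      fix z \<delta> assume "\<delta> \<in> Sset \<Omega> t z"
      then have x0: "z - t *\<^sub>R \<delta> \<in> \<Omega>" and x1: "z + (1 - t) *\<^sub>R \<delta> \<in> \<Omega>" by (auto simp: Sset_def)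
      show "norm \<delta> < e"
      proof (rule ccontr)
        assume "\<not> norm \<delta> < e"
        then have "e \<le> norm \<delta>" by simp
        from split[OF this] x0 x1 False show False by blast
      qed
    qed simp
  next
    case True
    then obtain b0 where b0: "b0 \<in> \<Omega>" "e/2 \<le> norm (a - b0)" by blast
    have "e/2 \<le> diameter \<Omega>" using diameter_bounded_bound[OF bdd a\<Omega> b0(1)] b0(2) by (simp add: dist_norm)
    then have "modconv \<Omega> a (e/2) > 0" using a e by (simp add: SC_def)
    then obtain \<rho> where \<rho>: "0 < ereal \<rho>" "ereal \<rho> < modconv \<Omega> a (e/2)" using ereal_dense2 by blast
    have \<rho>pos: "\<rho> > 0" using \<rho>(1) by simp
    have key: "n \<bullet> a + \<rho> * norm n \<le> n \<bullet> b" if b: "b \<in> \<Omega>" "e/2 \<le> norm (a - b)" for b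
    proof -
      define m where "m = (1/2) *\<^sub>R (a + b)"
      have "(1/2) *\<^sub>R a + (1/2) *\<^sub>R b \<in> \<Omega>" by (rule convexD[OF conv a\<Omega> b(1)]) auto
      then have m\<Omega>: "m \<in> \<Omega>" unfolding m_def by (simp add: scaleR_right_distrib)
      have "modconv \<Omega> a (e/2) \<le> ereal (infdist m (frontier \<Omega>))"
        unfolding modconv_def m_def by (rule INF_lower) (use b in auto)
      then have "ereal \<rho> < ereal (infdist m (frontier \<Omega>))" using \<rho>(2) by (rule order.strict_trans2[rotated])
      then have "\<rho> \<le> infdist m (frontier \<Omega>)" by simp
      then have sub: "ball m \<rho> \<subseteq> \<Omega>" by (rule ball_sub_from_infdist[OF m\<Omega>])
      define y where "y = m - (\<rho> / 2 / norm n) *\<^sub>R n"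
      have "dist m y = \<rho> / 2" unfolding y_def using nn \<rho>pos by (simp add: dist_norm)
      then have "y \<in> \<Omega>" using sub \<rho>pos by auto
      then have "n \<bullet> a \<le> n \<bullet> y" by (rule n\<Omega>)
      moreover have "n \<bullet> n = norm n * norm n" by (metis power2_norm_eq_inner power2_eq_square)
      then have "n \<bullet> y = n \<bullet> m - (\<rho> * norm n) / 2" unfolding y_def using nn
        by (simp add: inner_diff_right)
      moreover have "n \<bullet> m = (n \<bullet> a + n \<bullet> b) / 2" unfolding m_def by (simp add: inner_add_right)
      ultimately show ?thesis by argo
    qed
    define \<eta> where "\<eta> = min t (1 - t) * \<rho>"
    show ?thesis
    proof (intro exI[of _ \<eta>] conjI allI impI)
      show "\<eta> > 0" using t \<rho>pos by (simp add: \<eta>_def)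
      fix z \<delta> assume za: "dist z a < \<eta>" and d: "\<delta> \<in> Sset \<Omega> t z"
      then have x0: "z - t *\<^sub>R \<delta> \<in> \<Omega>" and x1: "z + (1 - t) *\<^sub>R \<delta> \<in> \<Omega>" by (auto simp: Sset_def)
      show "norm \<delta> < e"
      proof (rule ccontr)
        assume "\<not> norm \<delta> < e"
        then have sp: "e/2 \<le> norm (a - (z - t *\<^sub>R \<delta>)) \<or> e/2 \<le> norm (a - (z + (1 - t) *\<^sub>R \<delta>))"
          using split by simp
        have zc: "n \<bullet> z = (1 - t) * (n \<bullet> (z - t *\<^sub>R \<delta>)) + t * (n \<bullet> (z + (1 - t) *\<^sub>R \<delta>))"
          by (simp add: inner_diff_right inner_add_right algebra_simps)
        have g0: "n \<bullet> a \<le> n \<bullet> (z - t *\<^sub>R \<delta>)" using n\<Omega>[OF x0] .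
        have g1: "n \<bullet> a \<le> n \<bullet> (z + (1 - t) *\<^sub>R \<delta>)" using n\<Omega>[OF x1] .
        have mle: "min t (1 - t) * (\<rho> * norm n) \<le> n \<bullet> z - n \<bullet> a"
        proof (cases "e/2 \<le> norm (a - (z - t *\<^sub>R \<delta>))")
          case True
          have k: "n \<bullet> a + \<rho> * norm n \<le> n \<bullet> (z - t *\<^sub>R \<delta>)" by (rule key[OF x0 True])
          have "(1 - t) * (n \<bullet> a + \<rho> * norm n) \<le> (1 - t) * (n \<bullet> (z - t *\<^sub>R \<delta>))"
            using k t by (intro mult_left_mono) auto
          moreover have "t * (n \<bullet> a) \<le> t * (n \<bullet> (z + (1 - t) *\<^sub>R \<delta>))"
            using g1 t by (intro mult_left_mono) auto
          moreover have "min t (1 - t) * (\<rho> * norm n) \<le> (1 - t) * (\<rho> * norm n)"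
            using \<rho>pos nn by (intro mult_right_mono) auto
          ultimately show ?thesis using zc by (rule lin_aux1[rotated])
        next
          case False
          then have F: "e/2 \<le> norm (a - (z + (1 - t) *\<^sub>R \<delta>))" using sp by blast
          have k: "n \<bullet> a + \<rho> * norm n \<le> n \<bullet> (z + (1 - t) *\<^sub>R \<delta>)" by (rule key[OF x1 F])
          have "t * (n \<bullet> a + \<rho> * norm n) \<le> t * (n \<bullet> (z + (1 - t) *\<^sub>R \<delta>))"
            using k t by (intro mult_left_mono) auto
          moreover have "(1 - t) * (n \<bullet> a) \<le> (1 - t) * (n \<bullet> (z - t *\<^sub>R \<delta>))"
            using g0 t by (intro mult_left_mono) auto
          moreover have "min t (1 - t) * (\<rho> * norm n) \<le> t * (\<rho> * norm n)"
            using \<rho>pos nn by (intro mult_right_mono) auto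
          ultimately show ?thesis using zc by (rule lin_aux2[rotated])
        qed
        have "n \<bullet> z - n \<bullet> a = n \<bullet> (z - a)" by (simp add: inner_diff_right)
        also have "\<dots> \<le> norm n * norm (z - a)" by (rule norm_cauchy_schwarz)
        also have "\<dots> < norm n * \<eta>" using za nn by (simp add: dist_norm)
        also have "norm n * \<eta> = min t (1 - t) * (\<rho> * norm n)" by (simp add: \<eta>_def)
        finally have "n \<bullet> z - n \<bullet> a < min t (1 - t) * (\<rho> * norm n)" .
        with mle show False by linarith
      qed
    qed
  qed
qed

theorem proposition6:
  fixes \<Omega> :: "'a::euclidean_space set" and p0 p1 :: "'a \<Rightarrow> real"
  assumes "compact \<Omega>" and "convex \<Omega>" and "interior \<Omega> \<noteq> {}"
    and "\<And>x. x \<notin> \<Omega> \<Longrightarrow> p0 x = 0" and "\<And>x. x \<notin> \<Omega> \<Longrightarrow> p1 x = 0"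
    and "\<And>x. p0 x \<ge> 0" and "\<And>x. p1 x \<ge> 0"
    and "has_bochner_integral lborel p0 1" and "has_bochner_integral lborel p1 1"
    and "continuous_on \<Omega> p0" and "continuous_on \<Omega> p1"
    and "\<exists>M. \<forall>x\<in>\<Omega>. p0 x \<le> M" and "\<exists>M. \<forall>x\<in>\<Omega>. p1 x \<le> M"
    and "\<exists>c>0. \<forall>x\<in>\<Omega>. p0 x \<ge> c" and "\<exists>c>0. \<forall>x\<in>\<Omega>. p1 x \<ge> c"
  shows "continuous_on \<Omega> (vfield \<Omega> p0 p1 0)
    \<and> continuous_on \<Omega> (vfield \<Omega> p0 p1 1)
    \<and> (\<forall>t. 0 < t \<and> t < 1 \<longrightarrow> continuous_on (interior \<Omega>) (vfield \<Omega> p0 p1 t))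
    \<and> (\<forall>t. 0 < t \<and> t < 1 \<longrightarrow>
         (let D = interior \<Omega> \<union> SC \<Omega>;
              w = (\<lambda>z. if z \<in> SC \<Omega> then 0 else vfield \<Omega> p0 p1 t z)
          in continuous_on D w
             \<and> (\<forall>g. continuous_on D g \<and> (\<forall>z\<in>interior \<Omega>. g z = vfield \<Omega> p0 p1 t z)
                    \<longrightarrow> (\<forall>z\<in>D. g z = w z))))"
proof -
  have cpt: "compact \<Omega>" and conv: "convex \<Omega>" and int: "interior \<Omega> \<noteq> {}" using assms(1-3) .
  have z0: "\<And>x. x \<notin> \<Omega> \<Longrightarrow> p0 x = 0" and z1: "\<And>x. x \<notin> \<Omega> \<Longrightarrow> p1 x = 0" using assms(4,5) by blast+
  have nn0: "\<And>x. 0 \<le> p0 x" and nn1: "\<And>x. 0 \<le> p1 x" using assms(6,7) by blast+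
  have cc0: "continuous_on \<Omega> p0" and cc1: "continuous_on \<Omega> p1" using assms(10,11) .
  have bdd: "bounded \<Omega>" using cpt by (rule compact_imp_bounded)
  have cl: "closed \<Omega>" using cpt by (rule compact_imp_closed)
  obtain M0' where M0': "\<forall>x\<in>\<Omega>. p0 x \<le> M0'" using assms(12) by blast
  obtain M1' where M1': "\<forall>x\<in>\<Omega>. p1 x \<le> M1'" using assms(13) by blast
  define Mx where "Mx = max M0' 0"
  define My where "My = max M1' 0"
  have le0: "p0 x \<le> Mx" for x using M0' z0[of x] by (cases "x \<in> \<Omega>") (auto simp: Mx_def)
  have le1: "p1 x \<le> My" for x using M1' z1[of x] by (cases "x \<in> \<Omega>") (auto simp: My_def)
  obtain ca where ca: "ca > 0" "\<forall>x\<in>\<Omega>. p0 x \<ge> ca" using assms(14) by blast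
  obtain cb where cb: "cb > 0" "\<forall>x\<in>\<Omega>. p1 x \<ge> cb" using assms(15) by blast
  have m0: "p0 \<in> borel_measurable borel"
  proof -
    have "integrable lborel p0" using assms(8) by (simp add: has_bochner_integral_iff)
    then show ?thesis using borel_measurable_integrable by simp
  qed
  have m1: "p1 \<in> borel_measurable borel"
  proof -
    have "integrable lborel p1" using assms(9) by (simp add: has_bochner_integral_iff)
    then show ?thesis using borel_measurable_integrable by simp
  qed
  have P1: "continuous_on \<Omega> (vfield \<Omega> p0 p1 0)"
    unfolding vfield_def by (simp add: continuous_intros)
  have P2: "continuous_on \<Omega> (vfield \<Omega> p0 p1 1)"
    unfolding vfield_def by (simp add: continuous_intros)
  have qnn: "0 \<le> qf p0 p1 t z \<delta>" for t z \<delta>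
    unfolding qf_def by (rule mult_nonneg_nonneg[OF nn0 nn1])
  have diam: "0 \<le> diameter \<Omega>" using bdd by (rule diameter_ge_0)
  have P34: "continuous_on (interior \<Omega>) (vfield \<Omega> p0 p1 t) \<and>
         (let D = interior \<Omega> \<union> SC \<Omega>;
              w = (\<lambda>z. if z \<in> SC \<Omega> then 0 else vfield \<Omega> p0 p1 t z)
          in continuous_on D w
             \<and> (\<forall>g. continuous_on D g \<and> (\<forall>z\<in>interior \<Omega>. g z = vfield \<Omega> p0 p1 t z)
                    \<longrightarrow> (\<forall>z\<in>D. g z = w z)))" if t: "0 < t" "t < 1" for t
  proof -
    define Dn where "Dn = (\<lambda>z. integral\<^sup>L lborel (\<lambda>\<delta>. qf p0 p1 t z \<delta>))"
    define Nn where "Nn = (\<lambda>z. integral\<^sup>L lborel (\<lambda>\<delta>. qf p0 p1 t z \<delta> *\<^sub>R \<delta>))"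
    have van: "qf p0 p1 t z \<delta> = 0" if "\<delta> \<notin> Sset \<Omega> t z" for z \<delta>
      using qf_vanish[of \<Omega> p0 p1 \<delta> t z] z0 z1 that by blast
    have veq: "vfield \<Omega> p0 p1 t z = (1 / Dn z) *\<^sub>R Nn z" for z
    proof -
      have "vfield \<Omega> p0 p1 t z = (1 / set_lebesgue_integral lborel (Sset \<Omega> t z) (\<lambda>\<delta>. qf p0 p1 t z \<delta>))
           *\<^sub>R set_lebesgue_integral lborel (Sset \<Omega> t z) (\<lambda>\<delta>. qf p0 p1 t z \<delta> *\<^sub>R \<delta>)"
        using t by (simp add: vfield_def qf_def)
      also have "set_lebesgue_integral lborel (Sset \<Omega> t z) (\<lambda>\<delta>. qf p0 p1 t z \<delta>) = Dn z"
        unfolding Dn_def by (rule set_integral_full) (rule van)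
      also have "set_lebesgue_integral lborel (Sset \<Omega> t z) (\<lambda>\<delta>. qf p0 p1 t z \<delta> *\<^sub>R \<delta>) = Nn z"
        unfolding Nn_def by (rule set_integral_full) (simp add: van)
      finally show ?thesis .
    qed
    have vfun: "vfield \<Omega> p0 p1 t = (\<lambda>z. (1 / Dn z) *\<^sub>R Nn z)" using veq by (rule ext)
    have isD0: "isCont (\<lambda>z. integral\<^sup>L lborel (\<lambda>\<delta>. qf p0 p1 t z \<delta> *\<^sub>R (1::real))) z" for z
      by (rule cont_int(1)[where \<Omega>=\<Omega> and Mx=Mx and My=My and B=1 and h="\<lambda>_. 1"])
         (use conv cpt cc0 cc1 z0 z1 nn0 nn1 le0 le1 m0 m1 t in auto)
    have intD0: "integrable lborel (\<lambda>\<delta>. qf p0 p1 t z \<delta> *\<^sub>R (1::real))" for z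
      by (rule cont_int(2)[where \<Omega>=\<Omega> and Mx=Mx and My=My and B=1 and h="\<lambda>_. 1"])
         (use conv cpt cc0 cc1 z0 z1 nn0 nn1 le0 le1 m0 m1 t in auto)
    have isD: "isCont Dn z" and intD: "integrable lborel (\<lambda>\<delta>. qf p0 p1 t z \<delta>)" for z
      using isD0[of z] intD0[of z] by (simp_all add: Dn_def)
    have isN: "isCont Nn z" for z
      unfolding Nn_def
      by (rule cont_int(1)[where \<Omega>=\<Omega> and Mx=Mx and My=My and B="diameter \<Omega>" and h="\<lambda>\<delta>. \<delta>"])
         (use conv cpt cc0 cc1 z0 z1 nn0 nn1 le0 le1 m0 m1 t diam in auto)
    have intN: "integrable lborel (\<lambda>\<delta>. qf p0 p1 t z \<delta> *\<^sub>R \<delta>)" for z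
      by (rule cont_int(2)[where \<Omega>=\<Omega> and Mx=Mx and My=My and B="diameter \<Omega>" and h="\<lambda>\<delta>. \<delta>"])
         (use conv cpt cc0 cc1 z0 z1 nn0 nn1 le0 le1 m0 m1 t diam in auto)
    have Dpos: "0 < Dn z" if "z \<in> interior \<Omega>" for z
      unfolding Dn_def
      by (rule int_pos[where \<Omega>=\<Omega> and ca=ca and cb=cb, OF intD[of z] qnn]) (use ca cb that t in auto)
    have isV: "isCont (vfield \<Omega> p0 p1 t) z" if "z \<in> interior \<Omega>" for z
    proof -
      have "Dn z \<noteq> 0" using Dpos[OF that] by simp
      then show ?thesis unfolding vfun by (intro continuous_intros isD isN)
    qed
    have contV: "continuous_on (interior \<Omega>) (vfield \<Omega> p0 p1 t)"
      by (rule continuous_at_imp_continuous_on) (use isV in blast)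
    have SCfr: "SC \<Omega> \<subseteq> frontier \<Omega>" by (auto simp: SC_def)
    have intfr: "interior \<Omega> \<inter> frontier \<Omega> = {}" by (auto simp: frontier_def)
    define D where "D = interior \<Omega> \<union> SC \<Omega>"
    define w where "w = (\<lambda>z. if z \<in> SC \<Omega> then 0 else vfield \<Omega> p0 p1 t z)"
    have wint: "w z = vfield \<Omega> p0 p1 t z" if "z \<in> interior \<Omega>" for z
      using that SCfr intfr unfolding w_def by auto
    have contw: "continuous_on D w"
      unfolding continuous_on_iff
    proof (intro ballI allI impI)
      fix x e assume xD: "x \<in> D" and e: "(0::real) < e"
      show "\<exists>d>0. \<forall>x'\<in>D. dist x' x < d \<longrightarrow> dist (w x') (w x) < e"
      proof (cases "x \<in> interior \<Omega>")
        case True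
        obtain d1 where d1: "d1 > 0" "\<And>x'. dist x' x < d1 \<Longrightarrow> dist (vfield \<Omega> p0 p1 t x') (vfield \<Omega> p0 p1 t x) < e"
          using isV[OF True] e unfolding continuous_at_eps_delta by blast
        obtain r where r: "r > 0" "ball x r \<subseteq> interior \<Omega>"
          using True open_interior open_contains_ball by blast
        show ?thesis
        proof (intro exI[of _ "min d1 r"] conjI ballI impI)
          show "min d1 r > 0" using d1 r by simp
          fix y assume yD: "y \<in> D" and dy: "dist y x < min d1 r"
          then have "y \<in> interior \<Omega>" using r(2) by (auto simp: dist_commute)
          then show "dist (w y) (w x) < e" using wint True d1(2) dy by simp
        qed
      next
        case False
        then have xSC: "x \<in> SC \<Omega>" using xD by (simp add: D_def)
        obtain \<eta> where \<eta>: "\<eta> > 0" "\<And>z \<delta>. dist z x < \<eta> \<Longrightarrow> \<delta> \<in> Sset \<Omega> t z \<Longrightarrow> norm \<delta> < e/2"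
          using SC_small[OF cpt conv int xSC _ t, of "e/2"] e by auto
        show ?thesis
        proof (intro exI[of _ \<eta>] conjI ballI impI)
          show "\<eta> > 0" by (rule \<eta>(1))
          fix y assume yD: "y \<in> D" and dy: "dist y x < \<eta>"
          have wx: "w x = 0" using xSC by (simp add: w_def)
          show "dist (w y) (w x) < e"
          proof (cases "y \<in> SC \<Omega>")
            case True
            then show ?thesis using wx e by (simp add: w_def)
          next
            case False
            then have yi: "y \<in> interior \<Omega>" using yD by (simp add: D_def)
            have sm: "norm \<delta> \<le> e/2" if "qf p0 p1 t y \<delta> \<noteq> 0" for \<delta>
            proof -
              have "\<delta> \<in> Sset \<Omega> t y" using van that by blast
              then show ?thesis using \<eta>(2)[OF dy] by (simp add: less_imp_le)
            qed
            have nb: "norm (Nn y) \<le> e/2 * Dn y"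
              unfolding Nn_def Dn_def by (rule int_bound[OF intD intN sm qnn])
            have Dy: "0 < Dn y" using Dpos[OF yi] .
            have "norm (w y) = norm (Nn y) / Dn y"
              using wint[OF yi] veq[of y] Dy by simp
            also have "\<dots> \<le> e/2" using nb Dy by (simp add: pos_divide_le_eq)
            also have "\<dots> < e" using e by simp
            finally show ?thesis using wx by simp
          qed
        qed
      qed
    qed
    have uniq: "\<forall>z\<in>D. g z = w z"
      if g: "continuous_on D g" "\<forall>z\<in>interior \<Omega>. g z = vfield \<Omega> p0 p1 t z" for g
    proof
      fix z assume zD: "z \<in> D"
      have ch: "continuous_on D (\<lambda>x. g x - w x)" using g(1) contw by (rule continuous_on_diff)
      have "closedin (top_of_set D) {x \<in> D. g x - w x = 0}"
        using ch by (rule continuous_closedin_preimage_constant)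
      then obtain C where C: "closed C" "{x \<in> D. g x - w x = 0} = D \<inter> C"
        unfolding closedin_closed by blast
      have "interior \<Omega> \<subseteq> C"
      proof
        fix x assume xi: "x \<in> interior \<Omega>"
        then have "x \<in> {x \<in> D. g x - w x = 0}" using g(2) wint[OF xi] by (simp add: D_def)
        then show "x \<in> C" using C(2) by blast
      qed
      then have "closure (interior \<Omega>) \<subseteq> C" using C(1) by (rule closure_minimal)
      moreover have "D \<subseteq> closure \<Omega>"
      proof -
        have "interior \<Omega> \<subseteq> closure \<Omega>" using interior_subset[of \<Omega>] closure_subset[of \<Omega>] by blast
        moreover have "SC \<Omega> \<subseteq> closure \<Omega>" using SCfr by (auto simp: frontier_def)
        ultimately show ?thesis by (simp add: D_def)
      qed
      ultimately have "z \<in> C" using zD convex_closure_interior[OF conv int] by blast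
      then have "z \<in> {x \<in> D. g x - w x = 0}" using C(2) zD by blast
      then show "g z = w z" by simp
    qed
    show ?thesis
      unfolding Let_def D_def[symmetric] w_def[symmetric]
      using contV contw uniq by blast
  qed
  show ?thesis using P1 P2 P34 by blast
qed

end
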